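(* Let $2\le k<n$ be integers, let $\mathcal D=\{d_1,\dots,d_k\}\subset\{0,1,\dots,n-1\}$ be a set of $k$ digits, and let $\alpha=\frac{\log k}{\log n}\in(0,1)$. For each $6<p<\infty$ let $c_{p,\alpha}>0$ be the exponent provided by Theorem 1.1 (the main decoupling theorem for AD-regular collections on the parabola). Then for every $\epsilon>0$ there is a constant $C=C(\epsilon,k,n,p)$ such that for every $i\ge1$, $$\mathrm{Dec}_p(C_i)\le C\,k^{\,i\left(\frac12-\frac3p-c_{p,\alpha}+\epsilon\right)}.$$
   Context: For $i\ge1$, $C_i=\{\sum_{j=1}^i a_jn^{-j}: a_j\in\mathcal D\}$ and $\mathcal I_i$ is the collection of the $k^i$ intervals $[c,c+n^{-i}]$, $c\in C_i$. For $I\in\mathcal I_i$ let $\theta_I=\{(x,x^2+t): x\in I,\ |t|\le n^{-2i}\}$. $\mathrm{Dec}_p(C_i)$ is the smallest constant such that $$\Big\|\sum_{I\in\mathcal I_i}F_{\theta_I}\Big\|_{L^p(\mathbb R^2)}\le \mathrm{Dec}_p(C_i)\Big(\sum_{I\in\mathcal I_i}\|F_{\theta_I}\|_{L^p(\mathbb R^2)}^2\Big)^{1/2}$$ for all functions $F_{\theta_I}:\mathbb R^2\to\mathbb C$ with $\operatorname{supp}\widehat{F_{\theta_I}}\subset\theta_I$. Theorem 1.1 (main theorem): for $\alpha\in(0,1)$ and $6<p<\infty$ there is $c_{p,\alpha}>0$ such that for all $C_{AD}\ge1,\epsilon>0$, all $R\ge 1$, all $(\alpha,R^{1/2},C_{AD})$-AD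 regular collections $\mathcal I$ and all $F$ with $\widehat F$ supported in $\mathcal N_{1/R}(\mathcal I)$, $\|F\|_{L^p}\lesssim_{\epsilon,C_{AD},p,\alpha}R^\epsilon(\#\Theta(\mathcal I))^{\frac12-\frac3p-c_{p,\alpha}}(\sum_\theta\|F_\theta\|_{L^p}^2)^{1/2}$. Here a collection $\mathcal I_R$ of pairwise disjoint length-$R^{-1}$ intervals in $[-1,1]$ is $(\alpha,R,C_{AD})$-AD regular if every interval $J$ with $2/R\le|J|\le4$ centered at a point of $\bigcup\mathcal I_R$ contains between $C_{AD}^{-1}(|J|R)^\alpha$ and $C_{AD}(|J|R)^\alpha$ intervals of $\mathcal I_R$; $\mathcal N_\delta(\mathcal I)=\{(x,x^2+t):x\in\bigcup\mathcal I,|t|\le\delta\}$; $\Theta(\mathcal I)$ consists of the regions $\{(x,x^2+t):x\in I,|t|\le1/R\}$, $I\in\mathcal I$; and $\widehat{F_\theta}=\widehat F 1_\theta$. *)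

theory Defs
  imports "HOL-Analysis.Analysis"
begin

type_synonym pt = "real \<times> real"

definition fourier2 :: "(pt \<Rightarrow> complex) \<Rightarrow> pt \<Rightarrow> complex" where
  "fourier2 F \<xi> = integral\<^sup>L lborel
      (\<lambda>x. F x * exp (- (2 * pi * \<i>) * complex_of_real (x \<bullet> \<xi>)))"

definition Lp_norm :: "real \<Rightarrow> (pt \<Rightarrow> complex) \<Rightarrow> real" where
  "Lp_norm p F = (integral\<^sup>L lborel (\<lambda>x. norm (F x) powr p)) powr (1 / p)"

definition fourier_supported :: "real \<Rightarrow> (pt \<Rightarrow> complex) \<Rightarrow> pt set \<Rightarrow> bool" where
  "fourier_supported p F S \<longleftrightarrow>
     integrable lborel F \<and> integrable lborel (\<lambda>x. norm (F x) powr p) \<and>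
     (\<forall>\<xi>. \<xi> \<notin> S \<longrightarrow> fourier2 F \<xi> = 0)"

definition theta :: "real \<Rightarrow> real \<Rightarrow> real \<Rightarrow> pt set" where
  "theta a w \<delta> = {(x, x\<^sup>2 + t) | x t. a \<le> x \<and> x \<le> a + w \<and> \<bar>t\<bar> \<le> \<delta>}"

text \<open>(alpha, R, C_AD)-AD regular collection of intervals [a, a + 1/R], a in A
  (collections are represented by the set of left endpoints).\<close>
definition ad_regular :: "real \<Rightarrow> real \<Rightarrow> real \<Rightarrow> real set \<Rightarrow> bool" where
  "ad_regular \<alpha> R C A \<longleftrightarrow>
     (\<forall>a\<in>A. -1 \<le> a \<and> a + 1 / R \<le> 1) \<and>
     (\<forall>a\<in>A. \<forall>b\<in>A. a \<noteq> b \<longrightarrow> {a..a + 1 / R} \<inter> {b..b + 1 / R} = {}) \<and>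
     (\<forall>x \<in> (\<Union>a\<in>A. {a..a + 1 / R}). \<forall>r. 2 / R \<le> 2 * r \<and> 2 * r \<le> 4 \<longrightarrow>
        (let N = real (card {a\<in>A. {a..a + 1 / R} \<subseteq> {x - r..x + r}}) in
           inverse C * (2 * r * R) powr \<alpha> \<le> N \<and> N \<le> C * (2 * r * R) powr \<alpha>))"

definition thm11_holds :: "real \<Rightarrow> real \<Rightarrow> real \<Rightarrow> bool" where
  "thm11_holds \<alpha> p c \<longleftrightarrow> c > 0 \<and>
     (\<forall>CAD \<ge> 1. \<forall>\<epsilon> > 0. \<exists>K. \<forall>R \<ge> 1. \<forall>A. ad_regular \<alpha> (sqrt R) CAD A \<longrightarrow>
        (\<forall>G :: real \<Rightarrow> pt \<Rightarrow> complex.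
           (\<forall>a\<in>A. fourier_supported p (G a) (theta a (1 / sqrt R) (1 / R))) \<longrightarrow>
           Lp_norm p (\<lambda>x. \<Sum>a\<in>A. G a x)
             \<le> K * R powr \<epsilon> * real (card A) powr (1/2 - 3/p - c)
                 * sqrt (\<Sum>a\<in>A. (Lp_norm p (G a))\<^sup>2)))"

definition Cset :: "nat \<Rightarrow> nat set \<Rightarrow> nat \<Rightarrow> real set" where
  "Cset n D i = {(\<Sum>j=1..i. real (a j) / real n ^ j) | a. \<forall>j. a j \<in> D}"

definition Dec :: "real \<Rightarrow> nat \<Rightarrow> nat set \<Rightarrow> nat \<Rightarrow> real" where
  "Dec p n D i = Inf {K. 0 \<le> K \<and>
     (\<forall>G :: real \<Rightarrow> pt \<Rightarrow> complex.
        (\<forall>s\<in>Cset n D i. fourier_supported p (G s) (theta s (1 / real n ^ i) (1 / real n ^ (2 * i)))) \<longrightarrow>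
        Lp_norm p (\<lambda>x. \<Sum>s\<in>Cset n D i. G s x)
          \<le> K * sqrt (\<Sum>s\<in>Cset n D i. (Lp_norm p (G s))\<^sup>2))}"

end

theory Submission
  imports Defs
begin

fun Mset :: "nat \<Rightarrow> nat set \<Rightarrow> nat \<Rightarrow> nat set" where
  "Mset n D 0 = {0}"
| "Mset n D (Suc i) = (\<lambda>(m,d). n*m+d) ` (Mset n D i \<times> D)"

fun vdig :: "nat \<Rightarrow> (nat \<Rightarrow> nat) \<Rightarrow> nat \<Rightarrow> nat" where
  "vdig n a 0 = 0"
| "vdig n a (Suc i) = n * vdig n a i + a (Suc i)"

lemma Mset_finite: "finite D \<Longrightarrow> finite (Mset n D i)"
  by (induction i) auto

lemma inj_dig: fixes n :: nat and X D :: "nat set" assumes "D \<subseteq> {0..<n}" shows "inj_on (\<lambda>(m,d). n*m+d) (X \<times> D)"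
proof (rule inj_onI, clarsimp)
  fix m d m' d' assume "m \<in> X" "d \<in> D" "m' \<in> X" "d' \<in> D" and e: "n*m+d = n*m'+d'"
  have "d < n" "d' < n" using assms \<open>d \<in> D\<close> \<open>d' \<in> D\<close> by auto
  then have "(n*m+d) mod n = d" "(n*m'+d') mod n = d'" by auto
  then have "d = d'" using e by simp
  then show "m = m' \<and> d = d'" using e \<open>d < n\<close> by simp
qed

lemma Mset_card: assumes "D \<subseteq> {0..<n}" "finite D" shows "card (Mset n D i) = card D ^ i"
proof (induction i)
  case 0 then show ?case by simp
next
  case (Suc i)
  have "card (Mset n D (Suc i)) = card (Mset n D i \<times> D)"
    by (simp add: card_image[OF inj_dig[OF assms(1)]])
  then show ?case using Suc by (simp add: card_cartesian_product)
qed

lemma Mset_bound: assumes "D \<subseteq> {0..<n}" shows "m \<in> Mset n D i \<Longrightarrow> m < n ^ i"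
proof (induction i arbitrary: m)
  case 0 then show ?case by simp
next
  case (Suc i)
  then obtain m' d where m: "m = n*m'+d" "m' \<in> Mset n D i" "d \<in> D" by auto
  have "m' + 1 \<le> n^i" using Suc.IH[OF m(2)] by simp
  then have "n * (m'+1) \<le> n * n^i" by (rule mult_le_mono2)
  moreover have "d < n" using assms m(3) by auto
  ultimately show ?case using m(1) by (simp add: algebra_simps)
qed

lemma vdig_cong: "(\<forall>j. 1 \<le> j \<and> j \<le> i \<longrightarrow> a j = b j) \<Longrightarrow> vdig n a i = vdig n b i"
  by (induction i) auto

lemma vdig_in: "(\<forall>j. a j \<in> D) \<Longrightarrow> vdig n a i \<in> Mset n D i"
  by (induction i) (auto intro!: image_eqI)

lemma Mset_vdig: assumes "D \<noteq> {}" shows "m \<in> Mset n D i \<Longrightarrow> \<exists>a. (\<forall>j. a j \<in> D) \<and> vdig n a i = m"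
proof (induction i arbitrary: m)
  case 0
  obtain d0 where "d0 \<in> D" using assms by auto
  then show ?case using 0 by (intro exI[of _ "\<lambda>_. d0"]) auto
next
  case (Suc i)
  then obtain m' d where m: "m = n*m'+d" "m' \<in> Mset n D i" "d \<in> D" by auto
  obtain a where a: "\<forall>j. a j \<in> D" "vdig n a i = m'" using Suc.IH m(2) by blast
  define b where "b = a(Suc i := d)"
  have "vdig n b i = vdig n a i" by (rule vdig_cong) (auto simp: b_def)
  then have "vdig n b (Suc i) = m" using a m by (simp add: b_def)
  moreover have "\<forall>j. b j \<in> D" using a m(3) by (auto simp: b_def)
  ultimately show ?case by blast
qed

lemma sum_vdig: assumes "n > 0" shows "(\<Sum>j=1..i. real (a j) / real n ^ j) = real (vdig n a i) / real n ^ i"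
proof (induction i)
  case 0 then show ?case by simp
next
  case (Suc i)
  have "(\<Sum>j=1..Suc i. real (a j) / real n ^ j) = real (vdig n a i) / real n ^ i + real (a (Suc i)) / real n ^ Suc i"
    using Suc by simp
  also have "\<dots> = real (vdig n a (Suc i)) / real n ^ Suc i" using assms by (simp add: field_simps)
  finally show ?case .
qed

lemma Cset_Mset: assumes "n > 0" "D \<noteq> {}"
  shows "Cset n D i = (\<lambda>m. real m / real n ^ i) ` Mset n D i"
proof
  show "Cset n D i \<subseteq> (\<lambda>m. real m / real n ^ i) ` Mset n D i"
  proof
    fix x assume "x \<in> Cset n D i"
    then obtain a where a: "\<forall>j. a j \<in> D" "x = (\<Sum>j=1..i. real (a j) / real n ^ j)"
      unfolding Cset_def by blast
    then have "x = real (vdig n a i) / real n ^ i" using sum_vdig[OF assms(1)] by simp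
    then show "x \<in> (\<lambda>m. real m / real n ^ i) ` Mset n D i" using vdig_in[OF a(1)] by blast
  qed
next
  show "(\<lambda>m. real m / real n ^ i) ` Mset n D i \<subseteq> Cset n D i"
  proof
    fix x assume "x \<in> (\<lambda>m. real m / real n ^ i) ` Mset n D i"
    then obtain m where "m \<in> Mset n D i" "x = real m / real n ^ i" by auto
    then obtain a where "\<forall>j. a j \<in> D" "vdig n a i = m" using Mset_vdig[OF assms(2)] by blast
    then have "x = (\<Sum>j=1..i. real (a j) / real n ^ j)" using sum_vdig[OF assms(1), of a i] \<open>x = _\<close> by simp
    then show "x \<in> Cset n D i" unfolding Cset_def using \<open>\<forall>j. a j \<in> D\<close> by blast
  qed
qed

lemma div_step: assumes "d < n" shows "(n*m+d) div (n * n^j) = m div (n^j::nat)"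
proof -
  have "(n*m+d) div n = m" using assms by simp
  then show ?thesis by (simp add: div_mult2_eq)
qed

lemma Mset_finite_sub: "finite D \<Longrightarrow> finite {m \<in> Mset n D i. P m}"
  by (rule finite_subset[of _ "Mset n D i"]) (auto simp del: Mset.simps intro: Mset_finite)

lemma block_upper:
  assumes "D \<subseteq> {0..<n}" "finite D" "D \<noteq> {}"
  shows "card {m \<in> Mset n D i. m div n^j = q} \<le> card D ^ j"
proof (induction i arbitrary: j q)
  case 0
  have "card {m \<in> Mset n D 0. m div n^j = q} \<le> card {0::nat}"
    by (rule card_mono) auto
  also have "\<dots> \<le> card D ^ j"
    using assms by (simp add: Suc_leI card_gt_0_iff one_le_power)
  finally show ?case .
next
  case (Suc i)
  show ?case
  proof (cases j)
    case 0
    have "card {m \<in> Mset n D (Suc i). m div n^j = q} \<le> card {q}"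
      by (rule card_mono) (auto simp: 0)
    then show ?thesis by (simp add: 0)
  next
    case (Suc j')
    have sub: "{m \<in> Mset n D (Suc i). m div n^j = q} \<subseteq>
        (\<lambda>(m,d). n*m+d) ` ({m \<in> Mset n D i. m div n^j' = q} \<times> D)"
    proof
      fix x assume "x \<in> {m \<in> Mset n D (Suc i). m div n^j = q}"
      then obtain m d where x: "x = n*m+d" "m \<in> Mset n D i" "d \<in> D" "x div n^j = q" by auto
      have "d < n" using x(3) assms(1) by auto
      then have "m div n^j' = q" using x(1,4) div_step[of d n m j'] by (simp add: Suc)
      then show "x \<in> (\<lambda>(m,d). n*m+d) ` ({m \<in> Mset n D i. m div n^j' = q} \<times> D)"
        using x by auto
    qed
    have "card {m \<in> Mset n D (Suc i). m div n^j = q}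
        \<le> card ((\<lambda>(m,d). n*m+d) ` ({m \<in> Mset n D i. m div n^j' = q} \<times> D))"
      by (rule card_mono[OF _ sub]) (simp add: Mset_finite_sub assms(2) del: Mset.simps)
    also have "\<dots> \<le> card ({m \<in> Mset n D i. m div n^j' = q} \<times> D)" by (rule card_image_le) (simp add: Mset_finite_sub assms(2) del: Mset.simps)
    also have "\<dots> = card {m \<in> Mset n D i. m div n^j' = q} * card D" by (simp add: card_cartesian_product)
    also have "\<dots> \<le> card D ^ j' * card D" using Suc.IH by simp
    finally show ?thesis by (simp add: Suc mult.commute)
  qed
qed

lemma block_lower:
  assumes "D \<subseteq> {0..<n}" "finite D"
  shows "m0 \<in> Mset n D i \<Longrightarrow> j \<le> i \<Longrightarrow> card D ^ j \<le> card {m \<in> Mset n D i. m div n^j = m0 div n^j}"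
proof (induction i arbitrary: j m0)
  case 0
  then have "{m \<in> Mset n D 0. m div n^j = m0 div n^j} = {0}" by auto
  then show ?case using 0 by simp
next
  case (Suc i)
  have fin: "finite {m \<in> Mset n D (Suc i). m div n^j = m0 div n^j}"
    using Mset_finite[OF assms(2), of n "Suc i"] by (rule rev_finite_subset) blast
  show ?case
  proof (cases j)
    case 0
    have "1 \<le> card {m \<in> Mset n D (Suc i). m div n^j = m0 div n^j}"
      using fin Suc.prems(1) by (auto simp: Suc_le_eq card_gt_0_iff)
    then show ?thesis by (simp add: 0)
  next
    case (Suc j')
    obtain m0' d0 where m0: "m0 = n*m0'+d0" "m0' \<in> Mset n D i" "d0 \<in> D" using Suc.prems(1) by auto
    have "d0 < n" using m0(3) assms(1) by auto
    have sub: "(\<lambda>(m,d). n*m+d) ` ({m \<in> Mset n D i. m div n^j' = m0' div n^j'} \<times> D)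
       \<subseteq> {m \<in> Mset n D (Suc i). m div n^j = m0 div n^j}"
    proof
      fix x assume "x \<in> (\<lambda>(m,d). n*m+d) ` ({m \<in> Mset n D i. m div n^j' = m0' div n^j'} \<times> D)"
      then obtain m d where x: "x = n*m+d" "m \<in> Mset n D i" "d \<in> D" "m div n^j' = m0' div n^j'" by auto
      have "d < n" using x(3) assms(1) by auto
      then have "x div n^j = m0 div n^j" using x(1,4) div_step[of d n m j'] div_step[OF \<open>d0 < n\<close>, of m0' j'] m0(1)
        by (simp add: Suc)
      then show "x \<in> {m \<in> Mset n D (Suc i). m div n^j = m0 div n^j}" using x by auto
    qed
    have "card D ^ j = card D ^ j' * card D" by (simp add: Suc)
    also have "\<dots> \<le> card {m \<in> Mset n D i. m div n^j' = m0' div n^j'} * card D"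
      using Suc.IH[OF m0(2)] Suc.prems(2) Suc by simp
    also have "\<dots> = card ({m \<in> Mset n D i. m div n^j' = m0' div n^j'} \<times> D)" by (simp add: card_cartesian_product)
    also have "\<dots> = card ((\<lambda>(m,d). n*m+d) ` ({m \<in> Mset n D i. m div n^j' = m0' div n^j'} \<times> D))"
      by (rule card_image[symmetric], rule inj_dig[OF assms(1)])
    also have "\<dots> \<le> card {m \<in> Mset n D (Suc i). m div n^j = m0 div n^j}"
      by (rule card_mono[OF fin sub])
    finally show ?thesis .
  qed
qed

lemma interval_count:
  assumes "D \<subseteq> {0..<n}" "finite D" "D \<noteq> {}" "0 \<le> L" "L < real n ^ j"
  shows "card {m \<in> Mset n D i. u \<le> real m \<and> real m \<le> u + L} \<le> 2 * card D ^ j"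
proof -
  define lo where "lo = nat \<lceil>u\<rceil>"
  define q where "q = lo div n^j"
  have sub: "{m \<in> Mset n D i. u \<le> real m \<and> real m \<le> u + L} \<subseteq>
      {m \<in> Mset n D i. m div n^j = q} \<union> {m \<in> Mset n D i. m div n^j = Suc q}"
  proof
    fix m assume m: "m \<in> {m \<in> Mset n D i. u \<le> real m \<and> real m \<le> u + L}"
    have "lo \<le> m" using m unfolding lo_def by (simp add: ceiling_le nat_le_iff)
    have "real lo \<ge> u" unfolding lo_def by linarith
    then have "real m < real lo + real n ^ j" using m assms(5) by auto
    then have "real m \<le> real (lo + n^j)" by simp
    then have "m \<le> lo + n^j" by (simp only: of_nat_le_iff)
    have "q \<le> m div n^j" unfolding q_def using \<open>lo \<le> m\<close> by (rule div_le_mono)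
    moreover have "m div n^j \<le> (lo + n^j) div n^j" using \<open>m \<le> lo + n^j\<close> by (rule div_le_mono)
    moreover have "(lo + n^j) div n^j = Suc q"
proof -
      have "n^j > 0" using assms(4,5) by (cases "n = 0") (auto simp: power_0_left split: if_splits)
      then show ?thesis by (simp add: q_def)
    qed
    ultimately have "m div n^j = q \<or> m div n^j = Suc q" by linarith
    then show "m \<in> {m \<in> Mset n D i. m div n^j = q} \<union> {m \<in> Mset n D i. m div n^j = Suc q}" using m by auto
  qed
  have "card {m \<in> Mset n D i. u \<le> real m \<and> real m \<le> u + L}
     \<le> card ({m \<in> Mset n D i. m div n^j = q} \<union> {m \<in> Mset n D i. m div n^j = Suc q})"
    by (rule card_mono[OF _ sub]) (use Mset_finite[OF assms(2)] in auto)
  also have "\<dots> \<le> card {m \<in> Mset n D i. m div n^j = q} + card {m \<in> Mset n D i. m div n^j = Suc q}"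
    by (rule card_Un_le)
  also have "\<dots> \<le> 2 * card D ^ j" using block_upper[OF assms(1-3)] by (simp add: mult_2 add_mono)
  finally show ?thesis .
qed

locale cset_ctx =
  fixes n :: nat and D :: "nat set" and k :: nat and \<alpha> :: real
  assumes D_sub: "D \<subseteq> {0..<n}" and k_def: "card D = k" and k2: "2 \<le> k" and kn: "k < n"
    and alpha_def: "\<alpha> = ln (real k) / ln (real n)"
begin

lemma finD: "finite D" using D_sub finite_subset by blast
lemma Dne: "D \<noteq> {}" using k_def k2 by auto
lemma n2: "2 \<le> n" using k2 kn by linarith
lemma alpha_pos: "0 < \<alpha>" unfolding alpha_def using k2 n2 by (simp add: divide_pos_pos)
lemma alpha_le1: "\<alpha> \<le> 1"
proof -
  have "ln (real k) \<le> ln (real n)" using k2 kn by simp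
  moreover have "ln (real n) > 0" using n2 by simp
  ultimately show ?thesis unfolding alpha_def by simp
qed

lemma pow_alpha: "(real n ^ j) powr \<alpha> = real k ^ j"
proof -
  have "(real n ^ j) powr \<alpha> = exp (\<alpha> * ln (real n ^ j))"
    using n2 by (simp add: powr_def)
  also have "\<dots> = exp (real j * ln (real k))"
    using n2 by (simp add: ln_realpow alpha_def)
  also have "\<dots> = real k powr real j" using k2 by (simp add: powr_def)
  also have "\<dots> = real k ^ j" using k2 by (simp add: powr_realpow)
  finally show ?thesis .
qed

lemma c_pow: assumes "1 \<le> c" shows "(c * real n ^ j) powr \<alpha> \<le> c * real k ^ j"
proof -
  have "(c * real n ^ j) powr \<alpha> = c powr \<alpha> * (real n ^ j) powr \<alpha>"
    using assms by (simp add: powr_mult)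
  also have "\<dots> = c powr \<alpha> * real k ^ j" by (simp add: pow_alpha)
  also have "\<dots> \<le> c * real k ^ j"
  proof -
    have "c powr \<alpha> \<le> c powr 1" using assms alpha_le1 by (intro powr_mono) auto
    then show ?thesis using assms by (simp add: mult_right_mono)
  qed
  finally show ?thesis .
qed

lemma exp_exists: assumes "1 \<le> L" shows "\<exists>E. real n ^ E \<le> L \<and> L < real n ^ Suc E"
proof -
  have "\<exists>j. L < real n ^ j" using n2 by (intro real_arch_pow) simp
  define j0 where "j0 = (LEAST j. L < real n ^ j)"
  have j0: "L < real n ^ j0" unfolding j0_def using \<open>\<exists>j. _\<close> by (rule LeastI_ex)
  have "j0 \<noteq> 0" using j0 assms by (intro notI) simp
  then obtain E where E: "j0 = Suc E" by (cases j0) auto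
  have "\<not> L < real n ^ E" unfolding j0_def using E j0_def by (metis lessI not_less_Least)
  then show ?thesis using j0 E by (intro exI[of _ E]) auto
qed

definition Bset :: "nat \<Rightarrow> nat \<Rightarrow> nat set" where
  "Bset d i' = (\<lambda>m'. n*m'+d) ` Mset n D i'"

lemma inj_g: "inj_on (\<lambda>m'. n*m'+d) X"
  using n2 by (intro inj_onI) simp

lemma count_upper:
  assumes "1 \<le> rho" "d \<in> D"
  shows "real (card {m \<in> Bset d i'. X - rho \<le> real m \<and> real m + 1 \<le> X + rho})
     \<le> 4 * real k ^ 2 * (2 * rho) powr \<alpha>"
proof -
  define u where "u = (X - rho - real d) / real n"
  define L where "L = 2 * rho / real n"
  have npos: "real n > 0" using n2 by simp
  have sub: "{m \<in> Bset d i'. X - rho \<le> real m \<and> real m + 1 \<le> X + rho}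
     \<subseteq> (\<lambda>m'. n*m'+d) ` {m' \<in> Mset n D i'. u \<le> real m' \<and> real m' \<le> u + L}"
  proof
    fix m assume mm: "m \<in> {m \<in> Bset d i'. X - rho \<le> real m \<and> real m + 1 \<le> X + rho}"
    then obtain m' where m01: "m = n*m'+d" "m' \<in> Mset n D i'" unfolding Bset_def by blast
    have m: "m = n*m'+d" "m' \<in> Mset n D i'" "X - rho \<le> real m" "real m + 1 \<le> X + rho"
      using m01 mm by auto
    have "real m = real n * real m' + real d" using m(1) by simp
    then have "u \<le> real m'" "real m' \<le> u + L"
      using m(3,4) npos unfolding u_def L_def by (auto simp: field_simps)
    then show "m \<in> (\<lambda>m'. n*m'+d) ` {m' \<in> Mset n D i'. u \<le> real m' \<and> real m' \<le> u + L}"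
      using m by auto
  qed
  have "card {m \<in> Bset d i'. X - rho \<le> real m \<and> real m + 1 \<le> X + rho}
      \<le> card ((\<lambda>m'. n*m'+d) ` {m' \<in> Mset n D i'. u \<le> real m' \<and> real m' \<le> u + L})"
    by (rule card_mono[OF _ sub]) (simp add: Mset_finite_sub finD del: Mset.simps)
  also have "\<dots> \<le> card {m' \<in> Mset n D i'. u \<le> real m' \<and> real m' \<le> u + L}" by (rule card_image_le) (simp add: Mset_finite_sub finD del: Mset.simps)
  finally have c1: "real (card {m \<in> Bset d i'. X - rho \<le> real m \<and> real m + 1 \<le> X + rho})
      \<le> real (card {m' \<in> Mset n D i'. u \<le> real m' \<and> real m' \<le> u + L})" by linarith
  have L0: "0 \<le> L" unfolding L_def using assms npos by simp
  have ge1: "1 \<le> (2 * rho) powr \<alpha>" using assms alpha_pos by (intro ge_one_powr_ge_zero) auto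
  have kk: "1 \<le> real k" using k2 by simp
  show ?thesis
  proof (cases "L < 1")
    case True
    have "card {m' \<in> Mset n D i'. u \<le> real m' \<and> real m' \<le> u + L} \<le> 2 * card D ^ 0"
      by (rule interval_count[OF D_sub finD Dne L0]) (use True in simp)
    then have "real (card {m' \<in> Mset n D i'. u \<le> real m' \<and> real m' \<le> u + L}) \<le> 2" by simp
    also have "2 \<le> 4 * real k ^ 2 * (2 * rho) powr \<alpha>"
    proof -
      have "1 \<le> real k ^ 2" using kk by simp
      then have "1 \<le> real k ^ 2 * (2 * rho) powr \<alpha>" using ge1 by (metis mult_mono' mult_1 zero_le_one)
      then show ?thesis by simp
    qed
    finally show ?thesis using c1 by linarith
  next
    case False
    then obtain E where E: "real n ^ E \<le> L" "L < real n ^ Suc E" using exp_exists[of L] by (auto simp: not_less)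
    have ic: "card {m' \<in> Mset n D i'. u \<le> real m' \<and> real m' \<le> u + L} \<le> 2 * card D ^ Suc E"
      by (rule interval_count[OF D_sub finD Dne L0 E(2)])
    then have c2: "real (card {m' \<in> Mset n D i'. u \<le> real m' \<and> real m' \<le> u + L}) \<le> 2 * real k * real k ^ E"
    proof -
      have "real (card {m' \<in> Mset n D i'. u \<le> real m' \<and> real m' \<le> u + L}) \<le> real (2 * card D ^ Suc E)"
        using ic by (simp only: of_nat_le_iff)
      then show ?thesis using k_def by simp
    qed
    have "real k ^ E = (real n ^ E) powr \<alpha>" by (simp add: pow_alpha)
    also have "\<dots> \<le> L powr \<alpha>" using E(1) alpha_pos by (intro powr_mono2) auto
    also have "\<dots> \<le> (2 * rho) powr \<alpha>"
    proof -
      have "2 * rho * 1 \<le> 2 * rho * real n" using n2 assms by (intro mult_left_mono) auto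
      then have "L \<le> 2 * rho" unfolding L_def using npos by (simp add: divide_le_eq)
      then show ?thesis using L0 alpha_pos by (intro powr_mono2) auto
    qed
    finally have "2 * real k * real k ^ E \<le> 2 * real k * (2 * rho) powr \<alpha>" using kk by simp
    also have "\<dots> \<le> 4 * real k ^ 2 * (2 * rho) powr \<alpha>"
    proof -
      have "2 * real k \<le> 4 * real k ^ 2" using kk by (simp add: power2_eq_square)
      then show ?thesis using ge1 by (intro mult_right_mono) auto
    qed
    finally show ?thesis using c1 c2 by linarith
  qed
qed


lemma blk: assumes "d < n" "m' div n^j = q"
  shows "q * n^Suc j \<le> n*m'+d" "n*m'+d+1 \<le> (q+1) * n^Suc j"
proof -
  have np: "n^j > 0" using n2 by simp
  have a: "q * n^j \<le> m'" using assms(2) div_times_less_eq_dividend by blast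
  have b: "m' mod n^j < n^j" using np by simp
  have "m' = q * n^j + m' mod n^j" using assms(2) div_mult_mod_eq[of m' "n^j"] by simp
  then have c: "m' + 1 \<le> (q+1) * n^j" using b by (simp add: algebra_simps)
  have e1: "q * n^Suc j = n * (q * n^j)" by (simp add: algebra_simps)
  have e2: "n * (q * n^j) \<le> n * m'" using a by (rule mult_le_mono2)
  show "q * n^Suc j \<le> n*m'+d" using e1 e2 by linarith
  have "n*m'+d+1 \<le> n * (m'+1)" using assms(1) by simp
  also have "\<dots> \<le> n * ((q+1) * n^j)" using c by (rule mult_le_mono2)
  also have "\<dots> = (q+1) * n^Suc j" by (simp add: algebra_simps)
  finally show "n*m'+d+1 \<le> (q+1) * n^Suc j" .
qed

lemma count_lower:
  assumes "d \<in> D" "m0' \<in> Mset n D i'" "real (n*m0'+d) \<le> X" "X \<le> real (n*m0'+d) + 1"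
    "1 \<le> rho" "rho \<le> 2 * real n ^ Suc i'"
  shows "inverse (4 * real k ^ 2) * (2 * rho) powr \<alpha>
     \<le> real (card {m \<in> Bset d i'. X - rho \<le> real m \<and> real m + 1 \<le> X + rho})"
proof -
  define S where "S = {m \<in> Bset d i'. X - rho \<le> real m \<and> real m + 1 \<le> X + rho}"
  have finS: "finite S" unfolding S_def Bset_def using Mset_finite[OF finD] by auto
  have dn: "d < n" using assms(1) D_sub by auto
  have kk: "1 \<le> real k" using k2 by simp
  have k4: "0 < 4 * real k ^ 2" using kk by simp
  have key: "(2 * rho) powr \<alpha> \<le> 4 * real k ^ 2 * real (card S)"
  proof (cases "rho < real n")
    case True
    have "n*m0'+d \<in> S" unfolding S_def Bset_def using assms by auto
    then have c1: "1 \<le> card S" using finS by (metis One_nat_def Suc_leI card_gt_0_iff empty_iff)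
    have "(2 * rho) powr \<alpha> \<le> (2 * real n ^ 1) powr \<alpha>" using True assms(5) alpha_pos by (intro powr_mono2) auto
    also have "\<dots> \<le> 2 * real k ^ 1" by (rule c_pow) simp
    also have "\<dots> \<le> 4 * real k ^ 2 * 1" using kk by (simp add: power2_eq_square)
    also have "\<dots> \<le> 4 * real k ^ 2 * real (card S)" using c1 k4 by (intro mult_left_mono) auto
    finally show ?thesis .
  next
    case False
    then obtain E where E: "real n ^ E \<le> rho" "rho < real n ^ Suc E"
      using exp_exists[of rho] assms(5) by auto
    have "E \<noteq> 0" using E(2) False by (intro notI) simp
    define j where "j = min (E - 1) i'"
    define Q where "Q = {m' \<in> Mset n D i'. m' div n^j = m0' div n^j}"
    have "card D ^ j \<le> card Q" unfolding Q_def
      by (rule block_lower[OF D_sub finD assms(2)]) (simp add: j_def)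
    moreover have "card Q = card ((\<lambda>m'. n*m'+d) ` Q)" by (rule card_image[symmetric, OF inj_g])
    moreover have "card ((\<lambda>m'. n*m'+d) ` Q) \<le> card S"
    proof (rule card_mono[OF finS], rule subsetI)
      fix m assume "m \<in> (\<lambda>m'. n*m'+d) ` Q"
      then obtain m' where m': "m = n*m'+d" "m' \<in> Mset n D i'" "m' div n^j = m0' div n^j"
        unfolding Q_def by blast
      define q where "q = m0' div n^j"
      define P where "P = n^Suc j"
      have h1: "q * P \<le> n*m'+d" "n*m'+d+1 \<le> (q+1) * P" using blk[OF dn m'(3)] unfolding q_def P_def by auto
      have h2: "q * P \<le> n*m0'+d" "n*m0'+d+1 \<le> (q+1) * P" using blk[OF dn, of m0' j q] unfolding q_def P_def by auto
      have "Suc j \<le> E" unfolding j_def using \<open>E \<noteq> 0\<close> by simp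
      then have "real n ^ Suc j \<le> real n ^ E" using n2 by (intro power_increasing) auto
      then have Prho: "real P \<le> rho" using E(1) unfolding P_def by simp
      have r1: "real q * real P \<le> real m" using h1(1) m'(1) by (metis of_nat_le_iff of_nat_mult)
      have r2: "real m + 1 \<le> (real q + 1) * real P" using h1(2) m'(1) by (metis of_nat_1 of_nat_add of_nat_le_iff of_nat_mult)
      have r3: "real q * real P \<le> real (n*m0'+d)" using h2(1) by (metis of_nat_le_iff of_nat_mult)
      have r4: "real (n*m0'+d) + 1 \<le> (real q + 1) * real P" using h2(2) by (metis of_nat_1 of_nat_add of_nat_le_iff of_nat_mult)
      have "X - rho \<le> real m" "real m + 1 \<le> X + rho"
        using r1 r2 r3 r4 Prho assms(3,4) by (auto simp: algebra_simps)
      then show "m \<in> S" unfolding S_def Bset_def using m' by auto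
    qed
    ultimately have cS: "real k ^ j \<le> real (card S)" using k_def by (metis of_nat_le_iff of_nat_power order_trans)
    have "(2 * rho) powr \<alpha> \<le> 4 * real k ^ 2 * real k ^ j"
    proof (cases "E - 1 \<le> i'")
      case True
      then have jE: "Suc E = j + 2" unfolding j_def using \<open>E \<noteq> 0\<close> by simp
      have "(2 * rho) powr \<alpha> \<le> (2 * real n ^ (j+2)) powr \<alpha>" using E(2) jE assms(5) alpha_pos by (intro powr_mono2) auto
      also have "\<dots> \<le> 2 * real k ^ (j+2)" by (rule c_pow) simp
      also have "\<dots> \<le> 4 * real k ^ 2 * real k ^ j" using kk by (simp add: power_add power2_eq_square)
      finally show ?thesis .
    next
      case False
      then have jE: "j = i'" unfolding j_def by simp
      have "(2 * rho) powr \<alpha> \<le> (4 * real n ^ Suc i') powr \<alpha>" using assms(5,6) alpha_pos by (intro powr_mono2) auto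
      also have "\<dots> \<le> 4 * real k ^ Suc i'" by (rule c_pow) simp
      also have "\<dots> \<le> 4 * real k ^ 2 * real k ^ j" using kk jE by (simp add: power2_eq_square)
      finally show ?thesis .
    qed
    also have "\<dots> \<le> 4 * real k ^ 2 * real (card S)" using cS k4 by (intro mult_left_mono) auto
    finally show ?thesis .
  qed
  have "inverse (4 * real k ^ 2) * (2 * rho) powr \<alpha> \<le> inverse (4 * real k ^ 2) * (4 * real k ^ 2 * real (card S))"
    using key k4 by (intro mult_left_mono) auto
  also have "\<dots> = real (card S)" using k4 by simp
  finally show ?thesis unfolding S_def .
qed


lemma Bset_sub: "d \<in> D \<Longrightarrow> Bset d i' \<subseteq> Mset n D (Suc i')"
  unfolding Bset_def by auto

lemma subset_iff_scaled:
  assumes "R > 0"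
  shows "({real m / R..real m / R + 1 / R} \<subseteq> {x - r..x + r}) \<longleftrightarrow>
         (x * R - r * R \<le> real m \<and> real m + 1 \<le> x * R + r * R)"
proof -
  have ne: "\<not> real m / R + 1 / R < real m / R" using assms by simp
  have "({real m / R..real m / R + 1 / R} \<subseteq> {x - r..x + r}) \<longleftrightarrow>
        (x - r \<le> real m / R \<and> real m / R + 1 / R \<le> x + r)"
    using ne by (simp add: atLeastatMost_subset_iff)
  also have "\<dots> \<longleftrightarrow> (x * R - r * R \<le> real m \<and> real m + 1 \<le> x * R + r * R)"
    using assms by (simp add: field_simps)
  finally show ?thesis .
qed

lemma adreg:
  assumes "d \<in> D"
  shows "ad_regular \<alpha> (real n ^ Suc i') (4 * real k ^ 2) ((\<lambda>m. real m / real n ^ Suc i') ` Bset d i')"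
proof -
  define R where "R = real n ^ Suc i'"
  have Rpos: "R > 0" unfolding R_def using n2 by simp
  define f where "f = (\<lambda>m::nat. real m / R)"
  have injf: "inj_on f X" for X unfolding f_def using Rpos by (intro inj_onI) simp
  have A: "(\<lambda>m. real m / real n ^ Suc i') ` Bset d i' = f ` Bset d i'" unfolding f_def R_def by simp
  have p1: "\<forall>a\<in>f ` Bset d i'. -1 \<le> a \<and> a + 1 / R \<le> 1"
  proof
    fix a assume "a \<in> f ` Bset d i'"
    then obtain m where m: "m \<in> Bset d i'" "a = f m" by auto
    have "m < n ^ Suc i'" using Mset_bound[OF D_sub] Bset_sub[OF assms] m(1) by blast
    then have "m + 1 \<le> n ^ Suc i'" by simp
    then have "real (m + 1) \<le> real (n ^ Suc i')" by (simp only: of_nat_le_iff)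
    then have "real m + 1 \<le> R" unfolding R_def by simp
    then have "a + 1 / R \<le> 1" using m(2) Rpos unfolding f_def
      by (auto simp: field_simps)
    moreover have "0 \<le> a" using m(2) Rpos unfolding f_def by simp
    ultimately show "-1 \<le> a \<and> a + 1 / R \<le> 1" by simp
  qed
  have p2: "\<forall>a\<in>f ` Bset d i'. \<forall>b\<in>f ` Bset d i'. a \<noteq> b \<longrightarrow> {a..a + 1 / R} \<inter> {b..b + 1 / R} = {}"
  proof (intro ballI impI)
    fix a b assume "a \<in> f ` Bset d i'" "b \<in> f ` Bset d i'" "a \<noteq> b"
    then obtain m1 m2 where m: "m1 \<in> Mset n D i'" "m2 \<in> Mset n D i'" "a = f (n*m1+d)" "b = f (n*m2+d)"
      unfolding Bset_def by auto
    have "m1 \<noteq> m2" using m \<open>a \<noteq> b\<close> by auto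
    have sep: "real (n*y1+d) + 1 < real (n*y2+d)" if "y1 < y2" for y1 y2 :: nat
    proof -
      have "y1 + 1 \<le> y2" using that by simp
      then have "n*(y1+1) \<le> n*y2" by (rule mult_le_mono2)
      then have "n*y1 + n \<le> n*y2" by (simp add: algebra_simps)
      then have "n*y1+d+1 < n*y2+d" using n2 by linarith
      then have "real (n*y1+d+1) < real (n*y2+d)" by (simp only: of_nat_less_iff)
      then show ?thesis by simp
    qed
    have "real (n*m1+d) + 1 < real (n*m2+d) \<or> real (n*m2+d) + 1 < real (n*m1+d)"
    proof -
      have "m1 < m2 \<or> m2 < m1" using \<open>m1 \<noteq> m2\<close> by arith
      then show ?thesis using sep by blast
    qed
    then have "a + 1 / R < b \<or> b + 1 / R < a" using m(3,4) Rpos unfolding f_def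
      by (auto simp: field_simps)
    then show "{a..a + 1 / R} \<inter> {b..b + 1 / R} = {}" by auto
  qed
  have p3: "\<forall>x \<in> (\<Union>a\<in>f ` Bset d i'. {a..a + 1 / R}). \<forall>r. 2 / R \<le> 2 * r \<and> 2 * r \<le> 4 \<longrightarrow>
        (let N = real (card {a\<in>f ` Bset d i'. {a..a + 1 / R} \<subseteq> {x - r..x + r}}) in
           inverse (4 * real k ^ 2) * (2 * r * R) powr \<alpha> \<le> N \<and> N \<le> (4 * real k ^ 2) * (2 * r * R) powr \<alpha>)"
  proof (intro ballI allI impI)
    fix x r assume x: "x \<in> (\<Union>a\<in>f ` Bset d i'. {a..a + 1 / R})" and r: "2 / R \<le> 2 * r \<and> 2 * r \<le> 4"
    obtain m0' where m0: "m0' \<in> Mset n D i'" "x \<in> {f (n*m0'+d)..f (n*m0'+d) + 1/R}"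
      using x unfolding Bset_def by auto
    define X where "X = x * R"
    define rho where "rho = r * R"
    have "{a\<in>f ` Bset d i'. {a..a + 1 / R} \<subseteq> {x - r..x + r}}
        = f ` {m \<in> Bset d i'. X - rho \<le> real m \<and> real m + 1 \<le> X + rho}"
      unfolding X_def rho_def f_def using subset_iff_scaled[OF Rpos] by auto
    then have N: "card {a\<in>f ` Bset d i'. {a..a + 1 / R} \<subseteq> {x - r..x + r}}
        = card {m \<in> Bset d i'. X - rho \<le> real m \<and> real m + 1 \<le> X + rho}"
      using card_image[OF injf] by simp
    have rho1: "1 \<le> rho" unfolding rho_def using r Rpos by (simp add: field_simps)
    have rho2: "rho \<le> 2 * real n ^ Suc i'" unfolding rho_def R_def using r Rpos R_def
      by (simp add: mult_right_mono)
    have X1: "real (n*m0'+d) \<le> X" "X \<le> real (n*m0'+d) + 1"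
      using m0(2) Rpos unfolding X_def f_def by (auto simp: field_simps)
    have e: "2 * r * R = 2 * rho" unfolding rho_def by simp
    show "let N = real (card {a\<in>f ` Bset d i'. {a..a + 1 / R} \<subseteq> {x - r..x + r}}) in
           inverse (4 * real k ^ 2) * (2 * r * R) powr \<alpha> \<le> N \<and> N \<le> (4 * real k ^ 2) * (2 * r * R) powr \<alpha>"
      unfolding Let_def N e
      by (rule conjI[OF count_lower[OF assms m0(1) X1 rho1 rho2] count_upper[OF rho1 assms]])
  qed
  show ?thesis unfolding ad_regular_def A R_def[symmetric]
    by (intro conjI; (rule p1[unfolded f_def] | rule p2[unfolded f_def] | rule p3[unfolded f_def]))
qed

end

lemma pow_sum:
  fixes f :: "'i \<Rightarrow> complex"
  assumes "finite I" "p > 0"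
  shows "norm (\<Sum>i\<in>I. f i) powr p \<le> real (card I) powr p * (\<Sum>i\<in>I. norm (f i) powr p)"
proof -
  define T where "T = (\<Sum>i\<in>I. norm (f i) powr p)"
  have T0: "0 \<le> T" unfolding T_def by (intro sum_nonneg) simp
  have each: "norm (f i) \<le> T powr (1/p)" if "i \<in> I" for i
  proof -
    have "norm (f i) powr p \<le> T" unfolding T_def
      using member_le_sum[OF that, of "\<lambda>i. norm (f i) powr p"] assms(1) by simp
    then have "(norm (f i) powr p) powr (1/p) \<le> T powr (1/p)" using assms(2) by (intro powr_mono2) auto
    moreover have "(norm (f i) powr p) powr (1/p) = norm (f i)" using assms(2) by (simp add: powr_powr)
    ultimately show ?thesis by simp
  qed
  have "norm (\<Sum>i\<in>I. f i) \<le> (\<Sum>i\<in>I. norm (f i))" by (rule norm_sum)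
  also have "\<dots> \<le> (\<Sum>i\<in>I. T powr (1/p))" using each by (intro sum_mono) auto
  also have "\<dots> = real (card I) * T powr (1/p)" by simp
  finally have a: "norm (\<Sum>i\<in>I. f i) \<le> real (card I) * T powr (1/p)" .
  have "norm (\<Sum>i\<in>I. f i) powr p \<le> (real (card I) * T powr (1/p)) powr p"
    using a assms(2) by (intro powr_mono2) auto
  also have "\<dots> = real (card I) powr p * (T powr (1/p)) powr p" by (simp add: powr_mult)
  also have "(T powr (1/p)) powr p = T" using assms(2) T0 by (simp add: powr_powr)
  finally show ?thesis unfolding T_def .
qed

lemma Lp_pow:
  assumes "p > 0" "Lp_norm p F \<le> B"
  shows "integral\<^sup>L lborel (\<lambda>x. norm (F x) powr p) \<le> B powr p"
proof -
  define J where "J = integral\<^sup>L lborel (\<lambda>x. norm (F x) powr p)"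
  have J0: "0 \<le> J" unfolding J_def by (rule Bochner_Integration.integral_nonneg) simp
  have "J = (J powr (1/p)) powr p" using assms(1) J0 by (simp add: powr_powr)
  also have "\<dots> \<le> B powr p" using assms J0 unfolding Lp_norm_def J_def[symmetric] by (intro powr_mono2) auto
  finally show ?thesis unfolding J_def .
qed

lemma Lp_nonneg: "0 \<le> Lp_norm p F"
  unfolding Lp_norm_def by simp

lemma sum_int_p:
  fixes F :: "'i \<Rightarrow> pt \<Rightarrow> complex"
  assumes "finite I" "p > 0"
    "\<And>i. i \<in> I \<Longrightarrow> integrable lborel (F i)"
    "\<And>i. i \<in> I \<Longrightarrow> integrable lborel (\<lambda>x. norm (F i x) powr p)"
  shows "integrable lborel (\<lambda>x. norm (\<Sum>i\<in>I. F i x) powr p)"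
proof (rule Bochner_Integration.integrable_bound)
  show "integrable lborel (\<lambda>x. real (card I) powr p * (\<Sum>i\<in>I. norm (F i x) powr p))"
    using assms(4) by (intro integrable_mult_right integrable_sum) auto
  have "(\<lambda>x. \<Sum>i\<in>I. F i x) \<in> borel_measurable lborel"
    using assms(3) by (intro borel_measurable_integrable integrable_sum) auto
  then show "(\<lambda>x. norm (\<Sum>i\<in>I. F i x) powr p) \<in> borel_measurable lborel" by measurable
  show "AE x in lborel. norm (norm (\<Sum>i\<in>I. F i x) powr p) \<le> norm (real (card I) powr p * (\<Sum>i\<in>I. norm (F i x) powr p))"
  proof (rule AE_I2)
    fix x
    have "0 \<le> real (card I) powr p * (\<Sum>i\<in>I. norm (F i x) powr p)" by (intro mult_nonneg_nonneg sum_nonneg) auto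
    then show "norm (norm (\<Sum>i\<in>I. F i x) powr p) \<le> norm (real (card I) powr p * (\<Sum>i\<in>I. norm (F i x) powr p))"
      using pow_sum[OF assms(1,2), of "\<lambda>i. F i x"] by simp
  qed
qed

lemma Lp_sum:
  fixes F :: "'i \<Rightarrow> pt \<Rightarrow> complex"
  assumes "finite I" "p > 0" "0 \<le> B"
    "\<And>i. i \<in> I \<Longrightarrow> integrable lborel (F i)"
    "\<And>i. i \<in> I \<Longrightarrow> integrable lborel (\<lambda>x. norm (F i x) powr p)"
    "\<And>i. i \<in> I \<Longrightarrow> Lp_norm p (F i) \<le> B"
  shows "Lp_norm p (\<lambda>x. \<Sum>i\<in>I. F i x) \<le> real (card I) powr (1 + 1/p) * B"
proof -
  define c where "c = real (card I)"
  have c0: "0 \<le> c" unfolding c_def by simp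
  have "integral\<^sup>L lborel (\<lambda>x. norm (\<Sum>i\<in>I. F i x) powr p)
      \<le> integral\<^sup>L lborel (\<lambda>x. c powr p * (\<Sum>i\<in>I. norm (F i x) powr p))"
    unfolding c_def
    by (rule integral_mono[OF sum_int_p[OF assms(1,2,4,5)]])
       (use assms(5) pow_sum[OF assms(1,2)] in \<open>auto intro!: integrable_mult_right integrable_sum\<close>)
  also have "\<dots> = c powr p * (\<Sum>i\<in>I. integral\<^sup>L lborel (\<lambda>x. norm (F i x) powr p))"
    using assms(5) by (simp add: integral_sum)
  also have "\<dots> \<le> c powr p * (\<Sum>i\<in>I. B powr p)"
    using Lp_pow[OF assms(2) assms(6)] by (intro mult_left_mono sum_mono) auto
  also have "\<dots> = c powr p * c * B powr p" unfolding c_def by simp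
  finally have J: "integral\<^sup>L lborel (\<lambda>x. norm (\<Sum>i\<in>I. F i x) powr p) \<le> c powr p * c * B powr p" .
  have J0: "0 \<le> integral\<^sup>L lborel (\<lambda>x. norm (\<Sum>i\<in>I. F i x) powr p)" by (rule Bochner_Integration.integral_nonneg) simp
  have "Lp_norm p (\<lambda>x. \<Sum>i\<in>I. F i x) \<le> (c powr p * c * B powr p) powr (1/p)"
    unfolding Lp_norm_def using J J0 assms(2) by (intro powr_mono2) auto
  also have "\<dots> = (c powr p) powr (1/p) * c powr (1/p) * (B powr p) powr (1/p)" by (simp add: powr_mult)
  also have "\<dots> = c * c powr (1/p) * B" using assms(2,3) c0 by (simp add: powr_powr)
  also have "\<dots> = c powr (1 + 1/p) * B"
  proof (cases "c = 0")
    case True then show ?thesis by simp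
  next
    case False then show ?thesis using c0 by (simp add: powr_add)
  qed
  finally show ?thesis unfolding c_def .
qed

theorem mainTheorem4:
  fixes k n :: nat and D :: "nat set" and p c :: real
  assumes "2 \<le> k" "k < n"
    and "D \<subseteq> {0..<n}" "card D = k"
    and "6 < p"
    and "thm11_holds (ln (real k) / ln (real n)) p c"
  shows "\<forall>\<epsilon> > 0. \<exists>C. \<forall>i \<ge> 1.
           Dec p n D i \<le> C * real k powr (real i * (1/2 - 3/p - c + \<epsilon>))"
proof (intro allI impI)
  fix \<epsilon> :: real assume eps: "\<epsilon> > 0"
  define \<alpha> where "\<alpha> = ln (real k) / ln (real n)"
  interpret L: cset_ctx n D k \<alpha>
    by unfold_locales (use assms in \<open>auto simp: \<alpha>_def\<close>)
  have p0: "p > 0" using assms(5) by simp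
  have H: "\<forall>CAD \<ge> 1. \<forall>\<epsilon> > 0. \<exists>K. \<forall>R \<ge> 1. \<forall>A. ad_regular \<alpha> (sqrt R) CAD A \<longrightarrow>
        (\<forall>G :: real \<Rightarrow> pt \<Rightarrow> complex.
           (\<forall>a\<in>A. fourier_supported p (G a) (theta a (1 / sqrt R) (1 / R))) \<longrightarrow>
           Lp_norm p (\<lambda>x. \<Sum>a\<in>A. G a x)
             \<le> K * R powr \<epsilon> * real (card A) powr (1/2 - 3/p - c)
                 * sqrt (\<Sum>a\<in>A. (Lp_norm p (G a))\<^sup>2))"
    using assms(6) unfolding thm11_holds_def \<alpha>_def by blast
  define CAD where "CAD = 4 * real k ^ 2"
  have kk: "1 \<le> real k" using assms(1) by simp
  have CAD1: "1 \<le> CAD" unfolding CAD_def using kk using one_le_power[OF kk, of 2] by linarith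
  define \<epsilon>' where "\<epsilon>' = \<epsilon> * \<alpha> / 2"
  have eps': "\<epsilon>' > 0" unfolding \<epsilon>'_def using eps L.alpha_pos by simp
  obtain K where K: "\<forall>R \<ge> 1. \<forall>A. ad_regular \<alpha> (sqrt R) CAD A \<longrightarrow>
        (\<forall>G :: real \<Rightarrow> pt \<Rightarrow> complex.
           (\<forall>a\<in>A. fourier_supported p (G a) (theta a (1 / sqrt R) (1 / R))) \<longrightarrow>
           Lp_norm p (\<lambda>x. \<Sum>a\<in>A. G a x)
             \<le> K * R powr \<epsilon>' * real (card A) powr (1/2 - 3/p - c)
                 * sqrt (\<Sum>a\<in>A. (Lp_norm p (G a))\<^sup>2))"
    using H CAD1 eps' by blast
  define K' where "K' = max K 0"
  define e where "e = 1/2 - 3/p - c"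
  define C where "C = real k powr (1 + 1/p) * K' * real k powr (- e)"
  show "\<exists>C. \<forall>i \<ge> 1. Dec p n D i \<le> C * real k powr (real i * (1/2 - 3/p - c + \<epsilon>))"
  proof (intro exI[of _ C] allI impI)
    fix i :: nat assume "1 \<le> i"
    then obtain i' where i: "i = Suc i'" by (cases i) auto

    have n2: "2 \<le> n" by (rule L.n2)
    have npos: "0 < real n" using n2 by simp
    define R where "R = real n ^ (2*i)"
    have R1: "1 \<le> R" unfolding R_def using n2 by (simp add: one_le_power)
    have "real n ^ (2*i) = (real n ^ i)^2" by (metis power_mult mult.commute)
    then have sqR: "sqrt R = real n ^ i" unfolding R_def by simp
    define S where "S = Cset n D i"
    define Ad where "Ad d = (\<lambda>m. real m / real n ^ Suc i') ` L.Bset d i'" for d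
    have MU: "Mset n D (Suc i') = (\<Union>d\<in>D. L.Bset d i')" unfolding L.Bset_def by auto
    have S_eq: "S = (\<Union>d\<in>D. Ad d)"
      unfolding S_def Ad_def i Cset_Mset[OF npos[unfolded of_nat_0_less_iff] L.Dne] MU by auto
    have finAd: "finite (Ad d)" for d
      unfolding Ad_def L.Bset_def using Mset_finite[OF L.finD] by simp
    have disj: "Ad d1 \<inter> Ad d2 = {}" if "d1 \<in> D" "d2 \<in> D" "d1 \<noteq> d2" for d1 d2
    proof (rule ccontr)
      assume "Ad d1 \<inter> Ad d2 \<noteq> {}"
      then obtain x where x: "x \<in> Ad d1" "x \<in> Ad d2" by blast
      obtain m1 where m1: "x = real (n*m1+d1) / real n ^ Suc i'" using x(1) unfolding Ad_def L.Bset_def by blast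
      obtain m2 where m2: "x = real (n*m2+d2) / real n ^ Suc i'" using x(2) unfolding Ad_def L.Bset_def by blast
      have "real (n*m1+d1) = real (n*m2+d2)" using m1 m2 npos by (simp only: divide_cancel_right) simp
      then have "n*m1+d1 = n*m2+d2" by (simp only: of_nat_eq_iff)
      then have "(n*m1+d1) mod n = (n*m2+d2) mod n" by simp
      moreover have "d1 < n" "d2 < n" using that assms(3) by auto
      ultimately show False using that(3) by simp
    qed
    have cardAd: "card (Ad d) = k ^ i'" if "d \<in> D" for d
    proof -
      have "card (Ad d) = card (L.Bset d i')" unfolding Ad_def
        by (rule card_image) (use npos in \<open>auto intro!: inj_onI\<close>)
      also have "\<dots> = card (Mset n D i')" unfolding L.Bset_def by (rule card_image[OF L.inj_g])
      also have "\<dots> = k ^ i'" using Mset_card[OF assms(3) L.finD] assms(4) by simp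
      finally show ?thesis .
    qed
    have AdS: "Ad d \<subseteq> S" if "d \<in> D" for d using S_eq that by auto
    have adr: "ad_regular \<alpha> (sqrt R) CAD (Ad d)" if "d \<in> D" for d
      unfolding sqR i Ad_def CAD_def using L.adreg[OF that, of i'] i by simp
    define M0 where "M0 = K' * R powr \<epsilon>' * real (k ^ i') powr e"
    have M00: "0 \<le> M0" unfolding M0_def K'_def by simp
    define Kdec where "Kdec = real k powr (1 + 1/p) * M0"
    have Kdec0: "0 \<le> Kdec" unfolding Kdec_def using M00 by simp
    have mem: "Kdec \<in> {K. 0 \<le> K \<and>
     (\<forall>G :: real \<Rightarrow> pt \<Rightarrow> complex.
        (\<forall>s\<in>Cset n D i. fourier_supported p (G s) (theta s (1 / real n ^ i) (1 / real n ^ (2 * i)))) \<longrightarrow>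
        Lp_norm p (\<lambda>x. \<Sum>s\<in>Cset n D i. G s x)
          \<le> K * sqrt (\<Sum>s\<in>Cset n D i. (Lp_norm p (G s))\<^sup>2))}"
    proof (intro CollectI conjI Kdec0 allI impI)
      fix G :: "real \<Rightarrow> pt \<Rightarrow> complex"
      assume hG: "\<forall>s\<in>Cset n D i. fourier_supported p (G s) (theta s (1 / real n ^ i) (1 / real n ^ (2 * i)))"
      define Q where "Q = sqrt (\<Sum>s\<in>S. (Lp_norm p (G s))\<^sup>2)"
      have Q0: "0 \<le> Q" unfolding Q_def by (intro real_sqrt_ge_zero sum_nonneg) simp
      have finS: "finite S" unfolding S_eq using finAd L.finD by simp
      have fs: "fourier_supported p (G s) (theta s (1 / sqrt R) (1 / R))" if "s \<in> S" for s
        using hG that unfolding S_def sqR unfolding R_def by simp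
      have intG: "integrable lborel (G s)" "integrable lborel (\<lambda>x. norm (G s x) powr p)" if "s \<in> S" for s
        using fs[OF that] unfolding fourier_supported_def by auto
      define F where "F d x = (\<Sum>s\<in>Ad d. G s x)" for d x
      have F1: "integrable lborel (F d)" if "d \<in> D" for d
        unfolding F_def using intG(1) AdS[OF that] by (intro Bochner_Integration.integrable_sum) auto
      have F2: "integrable lborel (\<lambda>x. norm (F d x) powr p)" if "d \<in> D" for d
        unfolding F_def using intG AdS[OF that] by (intro sum_int_p[OF finAd p0]) auto
      have F3: "Lp_norm p (F d) \<le> M0 * Q" if "d \<in> D" for d
      proof -
        have "Lp_norm p (\<lambda>x. \<Sum>a\<in>Ad d. G a x)
             \<le> K * R powr \<epsilon>' * real (card (Ad d)) powr (1/2 - 3/p - c)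
                 * sqrt (\<Sum>a\<in>Ad d. (Lp_norm p (G a))\<^sup>2)"
          using K R1 adr[OF that] fs AdS[OF that] by blast
        also have "\<dots> \<le> K' * R powr \<epsilon>' * real (k ^ i') powr e * sqrt (\<Sum>a\<in>Ad d. (Lp_norm p (G a))\<^sup>2)"
          unfolding cardAd[OF that] e_def K'_def
          by (intro mult_right_mono) (auto intro: sum_nonneg)
        also have "\<dots> \<le> M0 * Q" unfolding M0_def[symmetric] Q_def
          using M00 AdS[OF that] finS by (intro mult_left_mono real_sqrt_le_mono sum_mono2) auto
        finally show ?thesis unfolding F_def .
      qed
      have sumeq: "(\<lambda>x. \<Sum>s\<in>Cset n D i. G s x) = (\<lambda>x. \<Sum>d\<in>D. F d x)"
      proof
        fix x
        show "(\<Sum>s\<in>Cset n D i. G s x) = (\<Sum>d\<in>D. F d x)"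
          unfolding S_def[symmetric] S_eq F_def using L.finD finAd disj
          by (subst sum.UNION_disjoint) auto
      qed
      have "Lp_norm p (\<lambda>x. \<Sum>d\<in>D. F d x) \<le> real (card D) powr (1 + 1/p) * (M0 * Q)"
        by (rule Lp_sum[OF L.finD p0 _ F1 F2 F3]) (use M00 Q0 in auto)
      then show "Lp_norm p (\<lambda>x. \<Sum>s\<in>Cset n D i. G s x) \<le> Kdec * sqrt (\<Sum>s\<in>Cset n D i. (Lp_norm p (G s))\<^sup>2)"
        unfolding sumeq Kdec_def Q_def S_def assms(4) by (simp add: mult.assoc)
    qed
    have "Dec p n D i \<le> Kdec" unfolding Dec_def
      by (rule cInf_lower[OF mem]) (rule bdd_belowI[of _ 0], auto)
    also have "Kdec = C * real k powr (real i * (1/2 - 3/p - c + \<epsilon>))"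
    proof -
      have k0: "0 < real k" using kk by simp
      have "R powr \<epsilon>' = ((real n ^ (2*i)) powr \<alpha>) powr (\<epsilon>/2)" unfolding R_def \<epsilon>'_def
        by (simp add: powr_powr mult.commute)
      also have "\<dots> = (real k ^ (2*i)) powr (\<epsilon>/2)" by (simp add: L.pow_alpha)
      also have "\<dots> = real k powr (real i * \<epsilon>)" using k0
        by (simp add: powr_realpow[symmetric] powr_powr)
      finally have e1: "R powr \<epsilon>' = real k powr (real i * \<epsilon>)" .
      have e2: "real (k ^ i') powr e = real k powr (real i' * e)" using k0
        by (simp add: powr_realpow[symmetric] powr_powr)
      have "Kdec = real k powr (1 + 1/p) * K' * (real k powr (real i * \<epsilon>) * real k powr (real i' * e))"
        unfolding Kdec_def M0_def e1 e2 by simp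
      also have "\<dots> = real k powr (1 + 1/p) * K' * (real k powr (- e) * real k powr (real i * (e + \<epsilon>)))"
      proof -
        have "real i * \<epsilon> + real i' * e = - e + real i * (e + \<epsilon>)" using i by (simp add: algebra_simps)
        then show ?thesis by (simp add: powr_add[symmetric])
      qed
      finally show ?thesis unfolding C_def e_def by (simp add: mult.assoc)
    qed
    finally show "Dec p n D i \<le> C * real k powr (real i * (1/2 - 3/p - c + \<epsilon>))" .
  qed
qed

end
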